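(* Fix $k\in[n]$ and arbitrary negotiating positions $\mu_i'\in\mathbb{R}^n$ for $i\neq k$. Then $\sup_{\mu_k'\in\mathbb{R}^n} g_k(W',P')<\infty$, where $(W',P')$ is the stable point for the matrix $M'$ with columns $\mu_1',\dots,\mu_n'$. That is, no choice of negotiating position gives agent $k$ unbounded utility, even with full knowledge of the other agents' beliefs and positions.
   Context: Fix agents $[n]=\{1,\dots,n\}$. Let $\Sigma\in\mathbb{R}^{n\times n}$ be symmetric positive definite, $\Gamma=\mathrm{diag}(\gamma_1,\dots,\gamma_n)$ with all $\gamma_i>0$, and let $M\in\mathbb{R}^{n\times n}$ be the matrix of true beliefs with $i$-th column $\mu_i=Me_i$. For a matrix of reported negotiating positions $M'\in\mathbb{R}^{n\times n}$, the stable point for $M'$ is the unique pair $(W,P)$ of real $n\times n$ matrices with $W=W^T$, $P^T=-P$ and $M'-P=2\Sigma W\Gamma$; equivalently $\mathrm{vec}(W)=\tfrac12(\Gamma\otimes\Sigma+\Sigma\otimes\Gamma)^{-1}\mathrm{vec}(M'+M'^T)$ and $P=M'-2\Sigma W\Gamma$. Here $\mathrm{vec}$ stacks columns and $e_i$ is the $i$-th standard basis vector. Agent $i$'s (true) utility at $(W,P)$ is $g_i(W,P)=w_i^T(\mu_i-Pe_i)-\gamma_i\, w_i^T\Sigma w_i$, where $w_i=We_i$. *)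

theory Defs
  imports "HOL-Analysis.Analysis"
begin

text \<open>n x n real matrices are modelled as real^'n^'n, with agents indexed by the finite type 'n.\<close>

definition sym_posdef :: "real^'n^'n \<Rightarrow> bool" where
  "sym_posdef S \<longleftrightarrow> transpose S = S \<and> (\<forall>x. x \<noteq> 0 \<longrightarrow> x \<bullet> (S *v x) > 0)"

definition diag_mat :: "('n::finite \<Rightarrow> real) \<Rightarrow> real^'n^'n" where
  "diag_mat g = (\<chi> i j. if i = j then g i else 0)"

definition is_stable_point :: "real^'n^'n \<Rightarrow> real^'n^'n \<Rightarrow> real^'n^'n \<Rightarrow> real^'n^'n \<Rightarrow> real^'n^'n \<Rightarrow> bool" where
  "is_stable_point S G M' W P \<longleftrightarrow>
     transpose W = W \<and> transpose P = - P \<and> M' - P = 2 *\<^sub>R (S ** W ** G)"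

definition stable_point :: "real^'n^'n \<Rightarrow> real^'n^'n \<Rightarrow> real^'n^'n \<Rightarrow> (real^'n^'n) \<times> (real^'n^'n)" where
  "stable_point S G M' = (THE (W, P). is_stable_point S G M' W P)"

definition utility :: "real^'n^'n \<Rightarrow> ('n \<Rightarrow> real) \<Rightarrow> real^'n^'n \<Rightarrow> 'n \<Rightarrow> (real^'n^'n) \<times> (real^'n^'n) \<Rightarrow> real" where
  "utility S g M i WP = (let W = fst WP; P = snd WP; w = column i W in
     w \<bullet> (column i M - column i P) - g i * (w \<bullet> (S *v w)))"

definition set_column :: "'n \<Rightarrow> real^'n \<Rightarrow> real^'n^'n \<Rightarrow> real^'n^'n" where
  "set_column k m A = (\<chi> r j. if j = k then m $ r else A $ r $ j)"

end

theory Submission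
  imports Defs
begin

lemma inner_mat: "(A::real^'n^'m) \<bullet> B = (\<Sum>i\<in>UNIV. \<Sum>j\<in>UNIV. A$i$j * B$i$j)"
  by (simp add: inner_vec_def)

lemma inner_transpose: "transpose (A::real^'n^'n) \<bullet> transpose B = A \<bullet> B"
  unfolding inner_mat transpose_def vec_lambda_beta by (rule sum.swap)

lemma sym_skew_inner: assumes "transpose (W::real^'n^'n) = W" "transpose P = - P"
  shows "W \<bullet> P = 0"
proof -
  have "W \<bullet> P = transpose W \<bullet> transpose P" by (simp add: inner_transpose)
  also have "\<dots> = - (W \<bullet> P)" using assms by simp
  finally show ?thesis by simp
qed

lemma inner_mat_col: "(A::real^'n^'m) \<bullet> B = (\<Sum>j\<in>UNIV. column j A \<bullet> column j B)"
  unfolding inner_mat column_def inner_vec_def vec_lambda_beta inner_real_def by (rule sum.swap)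

lemma transpose_add: "transpose (A + B) = transpose A + transpose (B::real^'n^'m)"
  by (simp add: transpose_def vec_eq_iff)
lemma transpose_diff: "transpose (A - B) = transpose A - transpose (B::real^'n^'m)"
  by (simp add: transpose_def vec_eq_iff)
lemma transpose_neg: "transpose (- A) = - transpose (A::real^'n^'m)"
  by (simp add: transpose_def vec_eq_iff)

lemma transpose_diag: "transpose (diag_mat g) = diag_mat g"
  by (simp add: transpose_def diag_mat_def vec_eq_iff)

lemma mult_diag_right: "((A::real^'n^'m) ** diag_mat g) $ i $ j = A$i$j * g j"
  by (simp add: matrix_matrix_mult_def diag_mat_def if_distrib if_distribR cong: if_cong)

lemma mult_diag_left: "(diag_mat g ** (A::real^'m^'n)) $ i $ j = g i * A$i$j"
  by (simp add: matrix_matrix_mult_def diag_mat_def if_distrib if_distribR cong: if_cong)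

lemma column_mult: "column j ((A::real^'n^'m) ** B) = A *v column j B"
  by (simp add: column_def matrix_matrix_mult_def matrix_vector_mult_def vec_eq_iff)

lemma column_diag: "column j ((A::real^'n^'m) ** diag_mat g) = g j *\<^sub>R column j A"
  by (simp add: column_def mult_diag_right vec_eq_iff)

lemma quad_def: "(x::real^'n) \<bullet> (S *v x) = (\<Sum>i\<in>UNIV. \<Sum>l\<in>UNIV. x$i * S$i$l * x$l)"
  by (simp add: inner_vec_def matrix_vector_mult_def sum_distrib_left mult.assoc)

lemma quad_nonneg: "sym_posdef S \<Longrightarrow> 0 \<le> (x::real^'n) \<bullet> (S *v x)"
  unfolding sym_posdef_def by (cases "x = 0") (auto intro: less_imp_le)

lemma quad_zero: "sym_posdef S \<Longrightarrow> (x::real^'n) \<bullet> (S *v x) = 0 \<Longrightarrow> x = 0"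
  unfolding sym_posdef_def by (metis less_irrefl)

lemma inner_SWG: "(W::real^'n^'n) \<bullet> (S ** W ** diag_mat g)
   = (\<Sum>j\<in>UNIV. g j * (column j W \<bullet> (S *v column j W)))"
proof -
  have "W \<bullet> (S ** W ** diag_mat g) = (\<Sum>j\<in>UNIV. column j W \<bullet> column j (S ** W ** diag_mat g))"
    by (rule inner_mat_col)
  also have "\<dots> = (\<Sum>j\<in>UNIV. g j * (column j W \<bullet> (S *v column j W)))"
    by (simp only: column_diag) (simp only: column_mult inner_scaleR_right)
  finally show ?thesis .
qed

lemma inner_GWS: "(W::real^'n^'n) \<bullet> (diag_mat g ** W ** S)
   = (\<Sum>i\<in>UNIV. g i * (W$i \<bullet> (S *v W$i)))"
proof -
  have "W \<bullet> (diag_mat g ** W ** S) = (\<Sum>i\<in>UNIV. \<Sum>j\<in>UNIV. W$i$j * (\<Sum>l\<in>UNIV. g i * W$i$l * S$l$j))"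
    unfolding inner_mat by (simp add: matrix_matrix_mult_def[of "diag_mat g ** W" S] mult_diag_left)
  also have "\<dots> = (\<Sum>i\<in>UNIV. g i * (\<Sum>j\<in>UNIV. \<Sum>l\<in>UNIV. W$i$l * S$l$j * W$i$j))"
    by (simp add: sum_distrib_left mult_ac)
  also have "\<dots> = (\<Sum>i\<in>UNIV. g i * (\<Sum>l\<in>UNIV. \<Sum>j\<in>UNIV. W$i$l * S$l$j * W$i$j))"
    apply (rule sum.cong[OF refl])
    apply (subst sum.swap)
    apply (rule refl)
    done
  also have "\<dots> = (\<Sum>i\<in>UNIV. g i * (W$i \<bullet> (S *v W$i)))"
    by (simp only: quad_def)
  finally show ?thesis .
qed


lemma column_diff: "column j (A - B) = column j A - column j (B::real^'n^'m)"
  by (simp add: column_def vec_eq_iff)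
lemma column_scale: "column j (c *\<^sub>R A) = c *\<^sub>R column j (A::real^'n^'m)"
  by (simp add: column_def vec_eq_iff)

lemma L_inj:
  fixes S W :: "real^'n^'n"
  assumes S: "sym_posdef S" and g: "\<And>i. g i > 0"
    and h: "S ** W ** diag_mat g + diag_mat g ** W ** S = 0"
  shows "W = 0"
proof -
  let ?A = "\<Sum>j\<in>UNIV. g j * (column j W \<bullet> (S *v column j W))"
  let ?B = "\<Sum>i\<in>UNIV. g i * (W$i \<bullet> (S *v W$i))"
  have "0 = W \<bullet> (S ** W ** diag_mat g + diag_mat g ** W ** S)" using h by simp
  also have "\<dots> = ?A + ?B" by (simp add: inner_add_right inner_SWG inner_GWS)
  finally have e: "?A + ?B = 0" by simp
  have nA: "\<And>j. 0 \<le> g j * (column j W \<bullet> (S *v column j W))"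
    by (intro mult_nonneg_nonneg less_imp_le[OF g] quad_nonneg[OF S])
  have nB: "\<And>i. 0 \<le> g i * (W$i \<bullet> (S *v W$i))"
    by (intro mult_nonneg_nonneg less_imp_le[OF g] quad_nonneg[OF S])
  have "?A \<ge> 0" "?B \<ge> 0" using nA nB by (auto intro: sum_nonneg)
  hence "?A = 0" using e by linarith
  hence z: "\<And>j. g j * (column j W \<bullet> (S *v column j W)) = 0"
    using nA by (simp add: sum_nonneg_eq_0_iff)
  have "\<And>j. column j W = 0"
  proof -
    fix j
    have "column j W \<bullet> (S *v column j W) = 0" using z[of j] g[of j] by simp
    thus "column j W = 0" by (rule quad_zero[OF S])
  qed
  thus "W = 0" by (simp add: vec_eq_iff column_def)
qed

lemma matrix_add_rdistrib: "((B + C) ** A) = (B ** A) + (C ** (A::real^'n^'n))"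
  by (vector matrix_matrix_mult_def sum.distrib[symmetric] field_simps)

lemma L_linear: "linear (\<lambda>W::real^'n^'n. S ** W ** G + G ** W ** S)"
proof (rule linearI)
  fix A B :: "real^'n^'n"
  show "S ** (A + B) ** G + G ** (A + B) ** S = S ** A ** G + G ** A ** S + (S ** B ** G + G ** B ** S)"
    by (simp add: matrix_add_ldistrib matrix_add_rdistrib)
next
  fix c and A :: "real^'n^'n"
  show "S ** (c *\<^sub>R A) ** G + G ** (c *\<^sub>R A) ** S = c *\<^sub>R (S ** A ** G + G ** A ** S)"
    by (simp add: matrix_scalar_ac scalar_matrix_assoc scaleR_right_distrib)
qed

lemma transpose_L:
  fixes S W :: "real^'n^'n"
  assumes "transpose S = S"
  shows "transpose (S ** W ** diag_mat g) = diag_mat g ** transpose W ** S"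
  using assms by (simp add: matrix_transpose_mul transpose_diag matrix_mul_assoc)

lemma stable_char:
  fixes S W P M' :: "real^'n^'n"
  assumes S: "transpose S = S" and st: "is_stable_point S (diag_mat g) M' W P"
  shows "S ** W ** diag_mat g + diag_mat g ** W ** S = (1/2) *\<^sub>R (M' + transpose M')"
    and "P = M' - 2 *\<^sub>R (S ** W ** diag_mat g)"
proof -
  have W: "transpose W = W" and Pk: "transpose P = - P"
    and e: "M' - P = 2 *\<^sub>R (S ** W ** diag_mat g)" using st by (auto simp: is_stable_point_def)
  show P: "P = M' - 2 *\<^sub>R (S ** W ** diag_mat g)" using e by (simp add: algebra_simps)
  have "transpose P = transpose M' - 2 *\<^sub>R (diag_mat g ** W ** S)"
    using P transpose_L[OF S, of W g] W by (simp add: transpose_diff transpose_scalar)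
  with Pk P have h: "transpose M' - 2 *\<^sub>R (diag_mat g ** W ** S) = - (M' - 2 *\<^sub>R (S ** W ** diag_mat g))"
    by simp
  have h2: "transpose M' $i$j - 2 * (diag_mat g ** W ** S)$i$j = - (M'$i$j - 2 * (S ** W ** diag_mat g)$i$j)" for i j
    using arg_cong[OF h, of "\<lambda>A. A$i$j"] by simp
  show "S ** W ** diag_mat g + diag_mat g ** W ** S = (1/2) *\<^sub>R (M' + transpose M')"
  proof (rule vec_eq_iff[THEN iffD2], intro allI)
    fix i
    show "(S ** W ** diag_mat g + diag_mat g ** W ** S) $ i = ((1/2) *\<^sub>R (M' + transpose M')) $ i"
    proof (rule vec_eq_iff[THEN iffD2], intro allI)
      fix j
      show "(S ** W ** diag_mat g + diag_mat g ** W ** S) $ i $ j = ((1/2) *\<^sub>R (M' + transpose M')) $ i $ j"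
        using h2[of i j] by simp
    qed
  qed
qed


lemma sym_posdef_sym: "sym_posdef S \<Longrightarrow> transpose S = S"
  by (simp add: sym_posdef_def)

lemma stable_exists:
  fixes S M' :: "real^'n^'n"
  assumes S: "sym_posdef S" and g: "\<And>i. g i > 0"
  shows "\<exists>W P. is_stable_point S (diag_mat g) M' W P"
proof -
  define L where "L = (\<lambda>W::real^'n^'n. S ** W ** diag_mat g + diag_mat g ** W ** S)"
  have lin: "linear L" unfolding L_def by (rule L_linear)
  have inj: "inj L"
  proof (rule linear_injective_0[OF lin, THEN iffD2], intro allI impI)
    fix W assume "L W = 0"
    thus "W = 0" using L_inj[where g=g, OF S g] unfolding L_def by blast
  qed
  have "surj L" by (simp add: linear_injective_imp_surjective lin inj)
  then obtain W0 where W0: "L W0 = (1/2) *\<^sub>R (M' + transpose M')" by (metis surjE)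
  have St: "transpose S = S" using S by (rule sym_posdef_sym)
  have tL: "transpose (L W) = L (transpose W)" for W
    unfolding L_def using St
    by (simp add: transpose_add matrix_transpose_mul transpose_diag matrix_mul_assoc)
  have "L (transpose W0) = L W0"
    using tL[of W0] W0 by (simp add: transpose_scalar transpose_add add.commute)
  hence "L (transpose W0 - W0) = 0" by (simp add: linear_diff[OF lin])
  hence Wsym: "transpose W0 = W0" using inj linear_injective_0[OF lin] by auto
  define P where "P = M' - 2 *\<^sub>R (S ** W0 ** diag_mat g)"
  have tP: "transpose P = transpose M' - 2 *\<^sub>R (diag_mat g ** W0 ** S)"
    unfolding P_def using transpose_L[OF St, of W0 g] Wsym
    by (simp add: transpose_diff transpose_scalar)
  have Lv: "(S ** W0 ** diag_mat g + diag_mat g ** W0 ** S) $ i $ j = ((1/2) *\<^sub>R (M' + transpose M')) $ i $ j" for i j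
    using W0 unfolding L_def by simp
  have "transpose P = - P"
  proof (rule vec_eq_iff[THEN iffD2], intro allI)
    fix i
    show "transpose P $ i = (- P) $ i"
    proof (rule vec_eq_iff[THEN iffD2], intro allI)
      fix j
      show "transpose P $ i $ j = (- P) $ i $ j"
        using Lv[of i j] arg_cong[OF tP, of "\<lambda>A. A$i$j"] by (simp add: P_def)
    qed
  qed
  moreover have "M' - P = 2 *\<^sub>R (S ** W0 ** diag_mat g)" unfolding P_def by simp
  ultimately have "is_stable_point S (diag_mat g) M' W0 P"
    using Wsym by (simp add: is_stable_point_def)
  thus ?thesis by blast
qed

lemma stable_unique:
  fixes S M' :: "real^'n^'n"
  assumes S: "sym_posdef S" and g: "\<And>i. g i > 0"
    and 1: "is_stable_point S (diag_mat g) M' W1 P1"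
    and 2: "is_stable_point S (diag_mat g) M' W2 P2"
  shows "W1 = W2 \<and> P1 = P2"
proof -
  have St: "transpose S = S" using S by (rule sym_posdef_sym)
  define L where "L = (\<lambda>W::real^'n^'n. S ** W ** diag_mat g + diag_mat g ** W ** S)"
  have lin: "linear L" unfolding L_def by (rule L_linear)
  have "L W1 = L W2" unfolding L_def using stable_char(1)[OF St 1] stable_char(1)[OF St 2] by simp
  hence "L (W1 - W2) = 0" by (simp add: linear_diff[OF lin])
  hence "W1 - W2 = 0" using L_inj[where g=g, OF S g] unfolding L_def by blast
  hence "W1 = W2" by simp
  thus ?thesis using stable_char(2)[OF St 1] stable_char(2)[OF St 2] by simp
qed

lemma stable_point_is:
  fixes S M' :: "real^'n^'n"
  assumes S: "sym_posdef S" and g: "\<And>i. g i > 0"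
  shows "is_stable_point S (diag_mat g) M' (fst (stable_point S (diag_mat g) M')) (snd (stable_point S (diag_mat g) M'))"
proof -
  obtain W P where st: "is_stable_point S (diag_mat g) M' W P" using stable_exists[where g=g, OF S g] by blast
  have "stable_point S (diag_mat g) M' = (W, P)"
    unfolding stable_point_def
  proof (rule the_equality)
    show "case (W, P) of (W, P) \<Rightarrow> is_stable_point S (diag_mat g) M' W P" using st by simp
  next
    fix x assume "case x of (W, P) \<Rightarrow> is_stable_point S (diag_mat g) M' W P"
    thus "x = (W, P)" using stable_unique[where g=g, OF S g _ st] by (cases x) auto
  qed
  thus ?thesis using st by simp
qed


lemma quad_scale: "(c *\<^sub>R x) \<bullet> (S *v (c *\<^sub>R (x::real^'n))) = c^2 * (x \<bullet> (S *v x))"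
  by (simp add: matrix_vector_mult_scaleR power2_eq_square)

lemma quad_lower:
  fixes S :: "real^'n^'n"
  assumes S: "sym_posdef S"
  shows "\<exists>l>0. \<forall>x. l * (norm x)^2 \<le> x \<bullet> (S *v x)"
proof -
  let ?f = "\<lambda>x::real^'n. x \<bullet> (S *v x)"
  have c: "continuous_on (sphere 0 1) ?f"
    by (intro continuous_intros linear_continuous_on matrix_vector_mul_bounded_linear)
  have ne: "sphere (0::real^'n) 1 \<noteq> {}" by simp
  obtain x0 where x0: "x0 \<in> sphere 0 1" and m: "\<And>y. y \<in> sphere 0 1 \<Longrightarrow> ?f x0 \<le> ?f y"
    using continuous_attains_inf[OF compact_sphere ne c] by blast
  have "x0 \<noteq> 0" using x0 by auto
  hence pos: "?f x0 > 0" using S by (simp add: sym_posdef_def)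
  have "?f x0 * (norm x)^2 \<le> ?f x" for x
  proof (cases "x = 0")
    case True thus ?thesis by simp
  next
    case False
    let ?u = "(1 / norm x) *\<^sub>R x"
    have "?u \<in> sphere 0 1" using False by (simp add: norm_scaleR)
    hence "?f x0 \<le> ?f ?u" by (rule m)
    also have "?f ?u = (1/norm x)^2 * ?f x" by (rule quad_scale)
    finally have "?f x0 \<le> (1/norm x)^2 * ?f x" .
    hence "?f x0 * (norm x)^2 \<le> (1/norm x)^2 * ?f x * (norm x)^2"
      by (simp add: mult_right_mono)
    also have "\<dots> = ?f x" using False by (simp add: power2_eq_square field_simps)
    finally show ?thesis .
  qed
  thus ?thesis using pos by (metis mult.commute)
qed

lemma quad_bound:
  fixes S :: "real^'n^'n"
  assumes l: "l > 0" and d: "d > 0" and low: "\<forall>x. l * (norm x)^2 \<le> x \<bullet> (S *v x)"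
  shows "x \<bullet> b - d * (x \<bullet> (S *v x)) \<le> (norm b)^2 / (4 * d * l)"
proof -
  have cs: "x \<bullet> b \<le> norm x * norm b" by (rule norm_cauchy_schwarz)
  have "d * (l * (norm x)^2) \<le> d * (x \<bullet> (S *v x))" using low d by (simp add: mult_left_mono)
  hence "x \<bullet> b - d * (x \<bullet> (S *v x)) \<le> norm x * norm b - d * l * (norm x)^2" using cs by simp
  also have "\<dots> \<le> (norm b)^2 / (4 * d * l)"
  proof -
    have sq: "0 \<le> (norm b - 2*d*l*norm x)^2" by simp
    have "4*d*l*(norm x * norm b - d * l * (norm x)^2) \<le> (norm b)^2"
      using sq by (simp add: power2_eq_square algebra_simps)
    thus ?thesis using d l by (simp add: pos_le_divide_eq mult.commute mult.left_commute)
  qed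
  finally show ?thesis .
qed


theorem mainTheorem5:
  fixes S :: "real^'n^'n" and g :: "'n \<Rightarrow> real" and M :: "real^'n^'n"
    and M0 :: "real^'n^'n" and k :: 'n
  assumes "sym_posdef S"
    and "\<And>i. g i > 0"
  shows "bdd_above ((\<lambda>m. utility S g M k (stable_point S (diag_mat g) (set_column k m M0))) ` UNIV)"
proof -
  note S = assms(1) and g = assms(2)
  obtain l where l: "l > 0" and low: "\<forall>x. l * (norm x)^2 \<le> x \<bullet> (S *v x)"
    using quad_lower[OF S] by blast
  define b where "b j = (if j = k then column k M else column j M0)" for j
  define K where "K = (\<Sum>j\<in>UNIV. (norm (b j))^2 / (4 * g j * l))"
  have "utility S g M k (stable_point S (diag_mat g) (set_column k m M0)) \<le> K" for m
  proof -
    define M' where "M' = set_column k m M0"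
    define W where "W = fst (stable_point S (diag_mat g) M')"
    define P where "P = snd (stable_point S (diag_mat g) M')"
    have st: "is_stable_point S (diag_mat g) M' W P"
      unfolding W_def P_def by (rule stable_point_is[where g=g, OF S g])
    have Wsym: "transpose W = W" and Pk: "transpose P = - P"
      and e: "M' - P = 2 *\<^sub>R (S ** W ** diag_mat g)" using st by (auto simp: is_stable_point_def)
    define q where "q j = column j W \<bullet> (S *v column j W)" for j
    have qn: "0 \<le> g j * q j" for j
      unfolding q_def by (intro mult_nonneg_nonneg less_imp_le[OF g] quad_nonneg[OF S])
    have colM': "column j M' = (if j = k then m else column j M0)" for j
      unfolding M'_def by (simp add: column_def set_column_def vec_eq_iff)
    have colP: "column k P = m - (2 * g k) *\<^sub>R (S *v column k W)"
    proof -
      have "P = M' - 2 *\<^sub>R (S ** W ** diag_mat g)" using e by (simp add: algebra_simps)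
      hence "column k P = column k M' - 2 *\<^sub>R column k (S ** W ** diag_mat g)"
        by (simp add: column_diff column_scale)
      also have "\<dots> = m - (2 * g k) *\<^sub>R (S *v column k W)"
        using colM'[of k] by (simp only: column_diag) (simp only: column_mult scaleR_scaleR, simp)
      finally show ?thesis .
    qed
    have "W \<bullet> M' = W \<bullet> P + W \<bullet> (2 *\<^sub>R (S ** W ** diag_mat g))"
      using e by (metis diff_add_cancel inner_add_right add.commute)
    also have "\<dots> = 2 * (\<Sum>j\<in>UNIV. g j * q j)"
      using sym_skew_inner[OF Wsym Pk] by (simp add: inner_SWG q_def)
    finally have WM: "(\<Sum>j\<in>UNIV. column j W \<bullet> column j M') = 2 * (\<Sum>j\<in>UNIV. g j * q j)"
      by (simp add: inner_mat_col)
    define T where "T = (\<Sum>j\<in>UNIV. column j W \<bullet> b j - g j * q j)"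
    have "(\<Sum>j\<in>UNIV. column j W \<bullet> b j) - (\<Sum>j\<in>UNIV. column j W \<bullet> column j M')
        = (\<Sum>j\<in>UNIV. column j W \<bullet> (b j - column j M'))"
      by (simp add: sum_subtractf inner_diff_right)
    also have "\<dots> = (\<Sum>j\<in>UNIV. if j = k then column k W \<bullet> (column k M - m) else 0)"
      by (rule sum.cong) (auto simp: b_def colM')
    also have "\<dots> = column k W \<bullet> (column k M - m)" by simp
    finally have Tb: "T = (\<Sum>j\<in>UNIV. g j * q j) + column k W \<bullet> (column k M - m)"
      unfolding T_def using WM by (simp add: sum_subtractf)
    have u: "utility S g M k (W, P) = column k W \<bullet> (column k M - m) + g k * q k"
      unfolding utility_def q_def Let_def fst_conv snd_conv colP
      by (simp add: inner_diff_right inner_scaleR_right algebra_simps)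
    have "g k * q k \<le> (\<Sum>j\<in>UNIV. g j * q j)"
      by (rule member_le_sum) (auto intro: qn)
    hence "utility S g M k (W, P) \<le> T" using u Tb by linarith
    also have "T \<le> K" unfolding T_def K_def
      by (rule sum_mono) (simp add: q_def quad_bound[OF l g low])
    finally have "utility S g M k (W, P) \<le> K" .
    moreover have "stable_point S (diag_mat g) M' = (W, P)" by (simp add: W_def P_def)
    ultimately show ?thesis by (simp add: M'_def)
  qed
  thus ?thesis by (intro bdd_aboveI[where M=K]) auto
qed

end
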